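(* For any positive integers $n,p$ and any $k\ge 3$ (possibly $k=\infty$), there exists a path system $S$ with $n$ nodes, $p$ paths, bridge girth $>k$, size $\|S\|=\Theta(\beta(n,p,k))$, and no $2$-cycles.
   Context: A path system is a pair $S=(V,\Pi)$ where $V$ is a finite ground set of nodes and $\Pi$ is a multiset of finite sequences of nodes (paths), each containing each node at most once. The size is $\|S\|=\sum_{\pi\in\Pi}|\pi|$ ($|\pi|$ = number of nodes of $\pi$). Write $x<_\pi y$ if $x,y\in\pi$ and $x$ strictly precedes $y$ in $\pi$. A $b$-bridge consists of $b$ distinct nodes $v_1,\dots,v_b$ and $b$ distinct paths $\pi_1,\dots,\pi_b$ with $v_i<_{\pi_i}v_{i+1}$ for $1\le i\le b-1$ and $v_1<_{\pi_b}v_b$. The bridge girth is the least $b$ for which there is a $b$-bridge ($\infty$ if none). $\beta(n,p,k)$ is the maximum possible size of a path system with $n$ nodes, $p$ paths and bridge girth $>k$. A $2$-cycle in a path system is a pair of nodes $u,v$ and a pair of paths $\pi_1,\pi_2$ with $u<_{\pi_1}v$ and $v<_{\pi_2}u$. *)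

theory Defs
  imports Main "HOL-Library.Extended_Nat"
begin

text \<open>A path system (V, Pi): V a finite set of nodes (taken to be naturals),
  Pi a multiset of paths, represented as a list of paths (the order of the list
  is irrelevant; distinct paths = distinct list positions).\<close>

definition path_system :: "nat set \<Rightarrow> nat list list \<Rightarrow> bool" where
  "path_system V Pi \<longleftrightarrow> finite V \<and> (\<forall>\<pi>\<in>set Pi. distinct \<pi> \<and> set \<pi> \<subseteq> V)"

definition ps_size :: "nat list list \<Rightarrow> nat" where
  "ps_size Pi = sum_list (map length Pi)"

definition precedes :: "nat list \<Rightarrow> nat \<Rightarrow> nat \<Rightarrow> bool" where
  "precedes \<pi> x y \<longleftrightarrow> (\<exists>i j. i < j \<and> j < length \<pi> \<and> \<pi> ! i = x \<and> \<pi> ! j = y)"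

definition has_bridge :: "nat set \<Rightarrow> nat list list \<Rightarrow> nat \<Rightarrow> bool" where
  "has_bridge V Pi b \<longleftrightarrow> b \<ge> 1 \<and> (\<exists>v q.
     inj_on v {..<b} \<and> v ` {..<b} \<subseteq> V \<and>
     inj_on q {..<b} \<and> q ` {..<b} \<subseteq> {..<length Pi} \<and>
     (\<forall>i. i + 1 < b \<longrightarrow> precedes (Pi ! q i) (v i) (v (i + 1))) \<and>
     precedes (Pi ! q (b - 1)) (v 0) (v (b - 1)))"

definition girth_gt :: "nat set \<Rightarrow> nat list list \<Rightarrow> enat \<Rightarrow> bool" where
  "girth_gt V Pi k \<longleftrightarrow> (\<forall>b. has_bridge V Pi b \<longrightarrow> enat b > k)"

definition no_2cycle :: "nat list list \<Rightarrow> bool" where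
  "no_2cycle Pi \<longleftrightarrow> \<not> (\<exists>u v i j. i < length Pi \<and> j < length Pi \<and>
      precedes (Pi ! i) u v \<and> precedes (Pi ! j) v u)"

definition beta :: "nat \<Rightarrow> nat \<Rightarrow> enat \<Rightarrow> nat" where
  "beta n p k = Max {ps_size Pi | V Pi. path_system V Pi \<and> card V = n \<and> length Pi = p
                                        \<and> girth_gt V Pi k}"

end

theory Submission
  imports Defs
begin

lemma prec_Nil[simp]: "\<not> precedes [] x y"
  unfolding precedes_def by auto

lemma prec_Cons[simp]: "precedes (a # xs) x y \<longleftrightarrow> (a = x \<and> y \<in> set xs) \<or> precedes xs x y"
proof
  assume "precedes (a # xs) x y"
  then obtain i j where ij: "i < j" "j < length (a # xs)" "(a # xs) ! i = x" "(a # xs) ! j = y"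
    unfolding precedes_def by blast
  show "(a = x \<and> y \<in> set xs) \<or> precedes xs x y"
  proof (cases i)
    case 0
    then obtain j' where "j = Suc j'" using ij by (cases j) auto
    then show ?thesis using ij 0 by auto
  next
    case (Suc i')
    then obtain j' where "j = Suc j'" using ij by (cases j) auto
    then have "i' < j'" "j' < length xs" "xs ! i' = x" "xs ! j' = y" using ij Suc by auto
    then show ?thesis unfolding precedes_def by blast
  qed
next
  assume "(a = x \<and> y \<in> set xs) \<or> precedes xs x y"
  then show "precedes (a # xs) x y"
  proof
    assume h: "a = x \<and> y \<in> set xs"
    then obtain j where "j < length xs" "xs ! j = y" by (meson in_set_conv_nth)
    then show ?thesis using h unfolding precedes_def
      by (rule_tac x=0 in exI, rule_tac x="Suc j" in exI) auto
  next
    assume "precedes xs x y"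
    then obtain i j where "i < j" "j < length xs" "xs ! i = x" "xs ! j = y"
      unfolding precedes_def by blast
    then show ?thesis unfolding precedes_def
      by (rule_tac x="Suc i" in exI, rule_tac x="Suc j" in exI) auto
  qed
qed

lemma prec_mem: "precedes xs x y \<Longrightarrow> x \<in> set xs \<and> y \<in> set xs"
  by (induction xs) auto

lemma prec_neq: "distinct xs \<Longrightarrow> precedes xs x y \<Longrightarrow> x \<noteq> y"
  by (induction xs) (auto dest: prec_mem)

lemma prec_asym: "distinct xs \<Longrightarrow> precedes xs x y \<Longrightarrow> \<not> precedes xs y x"
  by (induction xs) (auto dest: prec_mem)

lemma prec_total: "x \<in> set xs \<Longrightarrow> y \<in> set xs \<Longrightarrow> x \<noteq> y \<Longrightarrow> precedes xs x y \<or> precedes xs y x"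
  by (induction xs) auto

lemma prec_filter: "precedes (filter P xs) x y \<Longrightarrow> precedes xs x y \<and> P x \<and> P y"
proof (induction xs)
  case Nil then show ?case by simp
next
  case (Cons a xs)
  show ?case
  proof (cases "P a")
    case True
    then have "(a = x \<and> y \<in> set (filter P xs)) \<or> precedes (filter P xs) x y" using Cons.prems by simp
    then show ?thesis using Cons.IH True by (auto dest: prec_mem)
  next
    case False
    then show ?thesis using Cons by simp
  qed
qed

lemma indep_exists:
  fixes E :: "'a \<Rightarrow> 'a \<Rightarrow> bool"
  assumes "finite A" "\<forall>a\<in>A. card {b\<in>A. E a b} \<le> d" "\<forall>a b. E a b \<longrightarrow> E b a" "\<forall>a. \<not> E a a"
  shows "\<exists>I\<subseteq>A. (\<forall>a\<in>I. \<forall>b\<in>I. \<not> E a b) \<and> card A \<le> (d+1) * card I"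
  using assms
proof (induction "card A" arbitrary: A rule: less_induct)
  case less
  show ?case
  proof (cases "A = {}")
    case True then show ?thesis by auto
  next
    case False
    then obtain a where a: "a \<in> A" by auto
    define N where "N = insert a {b\<in>A. E a b}"
    define A' where "A' = A - N"
    have NA: "N \<subseteq> A" using a N_def by auto
    have fC: "finite {b\<in>A. E a b}" using less.prems(1) by auto
    have "card N \<le> Suc (card {b\<in>A. E a b})" unfolding N_def
      using card_insert_le_m1 fC by (simp add: card_insert_if)
    moreover have "card {b\<in>A. E a b} \<le> d" using less.prems(2) a by blast
    ultimately have cN: "card N \<le> d + 1" by linarith
    have fA': "finite A'" using less.prems(1) A'_def by auto
    have fN: "finite N" using NA less.prems(1) finite_subset by blast
    have cA': "card A' = card A - card N" unfolding A'_def
      using NA fN by (simp add: card_Diff_subset)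
    have "N \<noteq> {}" using N_def by simp
    then have "card N \<ge> 1" using fN card_gt_0_iff by (metis One_nat_def Suc_leI)
    moreover have "card N \<le> card A" using NA less.prems(1) card_mono by blast
    ultimately have lt: "card A' < card A" using cA' by linarith
    have deg': "\<forall>x\<in>A'. card {b\<in>A'. E x b} \<le> d"
    proof
      fix x assume "x \<in> A'"
      then have "x \<in> A" using A'_def by auto
      moreover have "card {b\<in>A'. E x b} \<le> card {b\<in>A. E x b}"
        by (rule card_mono) (use less.prems(1) A'_def in auto)
      moreover have "card {b\<in>A. E x b} \<le> d" using less.prems(2) \<open>x \<in> A\<close> by blast
      ultimately show "card {b\<in>A'. E x b} \<le> d" by linarith
    qed
    obtain I' where I': "I' \<subseteq> A'" "\<forall>x\<in>I'. \<forall>y\<in>I'. \<not> E x y" "card A' \<le> (d+1) * card I'"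
      using less.hyps[OF lt fA' deg' less.prems(3,4)] by blast
    have aI': "a \<notin> I'" using I'(1) A'_def N_def by auto
    have fI': "finite I'" using I'(1) fA' finite_subset by blast
    have indep: "\<forall>x\<in>insert a I'. \<forall>y\<in>insert a I'. \<not> E x y"
    proof (intro ballI)
      fix x y assume "x \<in> insert a I'" "y \<in> insert a I'"
      then show "\<not> E x y"
      proof (elim insertE)
        assume "x = a" "y = a" then show ?thesis using less.prems(4) by blast
      next
        assume "x = a" "y \<in> I'" then show ?thesis using I'(1) A'_def N_def by blast
      next
        assume "x \<in> I'" "y = a"
        then have "\<not> E y x" using I'(1) A'_def N_def by blast
        then show ?thesis using less.prems(3)[rule_format, of x y] by blast
      next
        assume "x \<in> I'" "y \<in> I'" then show ?thesis using I'(2) by blast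
      qed
    qed
    have "card A \<le> card A' + (d + 1)" using cA' cN by linarith
    also have "\<dots> \<le> (d+1) * card I' + (d+1)" using I'(3) by linarith
    also have "\<dots> = (d+1) * card (insert a I')" using aI' fI' by simp
    finally have "card A \<le> (d+1) * card (insert a I')" .
    moreover have "insert a I' \<subseteq> A" using I'(1) A'_def a by blast
    ultimately show ?thesis using indep by blast
  qed
qed


lemma ps_mem: "path_system V Pi \<Longrightarrow> i < length Pi \<Longrightarrow> x \<in> set (Pi ! i) \<Longrightarrow> x \<in> V"
  unfolding path_system_def using nth_mem by blast

lemma ps_dist: "path_system V Pi \<Longrightarrow> i < length Pi \<Longrightarrow> distinct (Pi ! i)"
  unfolding path_system_def using nth_mem by blast

lemma bridge2:
  assumes ps: "path_system V Pi" and "i < length Pi" "j < length Pi" "i \<noteq> j"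
    and "precedes (Pi ! i) a b" "precedes (Pi ! j) a b"
  shows "has_bridge V Pi 2"
proof -
  have ab: "a \<noteq> b" using prec_neq[OF ps_dist[OF ps assms(2)] assms(5)] .
  have V: "a \<in> V" "b \<in> V" using prec_mem[OF assms(5)] ps_mem[OF ps assms(2)] by auto
  define v where "v = (\<lambda>t::nat. if t = 0 then a else b)"
  define q where "q = (\<lambda>t::nat. if t = 0 then i else j)"
  have L: "{..<2::nat} = {0,1}" by auto
  show ?thesis unfolding has_bridge_def
    apply (rule conjI, simp)
    apply (rule exI[of _ v], rule exI[of _ q])
    using assms ab V unfolding L v_def q_def by (auto simp: inj_on_def)
qed

lemma bridge3:
  assumes ps: "path_system V Pi" and "i < length Pi" "j < length Pi" "l < length Pi"
    "i \<noteq> j" "j \<noteq> l" "i \<noteq> l"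
    and "precedes (Pi ! i) a b" "precedes (Pi ! j) b c" "precedes (Pi ! l) a c"
    and "a \<noteq> b" "b \<noteq> c" "a \<noteq> c"
  shows "has_bridge V Pi 3"
proof -
  have V: "a \<in> V" "b \<in> V" "c \<in> V" using prec_mem[OF assms(8)] prec_mem[OF assms(9)]
      ps_mem[OF ps assms(2)] ps_mem[OF ps assms(3)] by auto
  define v where "v = (\<lambda>t::nat. if t = 0 then a else if t = 1 then b else c)"
  define q where "q = (\<lambda>t::nat. if t = 0 then i else if t = 1 then j else l)"
  have L: "{..<3::nat} = {0,1,2}" by auto
  have P: "\<forall>t. t + 1 < 3 \<longrightarrow> precedes (Pi ! q t) (v t) (v (t + 1))"
  proof (intro allI impI)
    fix t :: nat assume "t + 1 < 3"
    then have "t = 0 \<or> t = 1" by auto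
    then show "precedes (Pi ! q t) (v t) (v (t + 1))" using assms unfolding v_def q_def by auto
  qed
  show ?thesis unfolding has_bridge_def
    apply (rule conjI, simp)
    apply (rule exI[of _ v], rule exI[of _ q])
    using assms V P unfolding L v_def q_def by (auto simp: inj_on_def)
qed

definition after_p :: "nat list list \<Rightarrow> nat \<Rightarrow> nat \<Rightarrow> nat set" where
  "after_p Pi i x = {j. j < length Pi \<and> j \<noteq> i \<and> (\<exists>z. precedes (Pi ! i) x z \<and> precedes (Pi ! j) z x)}"

definition before_p :: "nat list list \<Rightarrow> nat \<Rightarrow> nat \<Rightarrow> nat set" where
  "before_p Pi i x = {j. j < length Pi \<and> j \<noteq> i \<and> (\<exists>z. precedes (Pi ! i) z x \<and> precedes (Pi ! j) x z)}"

lemma after_le1: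
  assumes ps: "path_system V Pi" and nb2: "\<not> has_bridge V Pi 2" and nb3: "\<not> has_bridge V Pi 3"
    and i: "i < length Pi"
  shows "card (after_p Pi i x) \<le> 1"
proof -
  have "\<forall>j1\<in>after_p Pi i x. \<forall>j2\<in>after_p Pi i x. j1 = j2"
  proof (intro ballI, rule ccontr)
    fix j1 j2 assume j1: "j1 \<in> after_p Pi i x" and j2: "j2 \<in> after_p Pi i x" and ne: "j1 \<noteq> j2"
    obtain z1 where z1: "precedes (Pi ! i) x z1" "precedes (Pi ! j1) z1 x" "j1 < length Pi" "j1 \<noteq> i"
      using j1 unfolding after_p_def by blast
    obtain z2 where z2: "precedes (Pi ! i) x z2" "precedes (Pi ! j2) z2 x" "j2 < length Pi" "j2 \<noteq> i"
      using j2 unfolding after_p_def by blast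
    have d: "distinct (Pi ! i)" using ps_dist[OF ps i] .
    have n1: "x \<noteq> z1" "x \<noteq> z2" using prec_neq[OF d] z1 z2 by auto
    show False
    proof (cases "z1 = z2")
      case True
      then show False using bridge2[OF ps z1(3) z2(3) ne z1(2)] z2(2) nb2 by auto
    next
      case False
      have "z1 \<in> set (Pi ! i)" "z2 \<in> set (Pi ! i)" using prec_mem z1(1) z2(1) by auto
      then have "precedes (Pi ! i) z1 z2 \<or> precedes (Pi ! i) z2 z1" using prec_total False by blast
      then show False
      proof
        assume h: "precedes (Pi ! i) z1 z2"
        show False using bridge3[OF ps i z2(3) z1(3) z2(4)[symmetric] ne[symmetric] z1(4)[symmetric] h z2(2) z1(2) False n1(2)[symmetric] n1(1)[symmetric]] nb3 by blast
      next
        assume h: "precedes (Pi ! i) z2 z1"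
        show False using bridge3[OF ps i z1(3) z2(3) z1(4)[symmetric] ne z2(4)[symmetric] h z1(2) z2(2) False[symmetric] n1(1)[symmetric] n1(2)[symmetric]] nb3 by blast
      qed
    qed
  qed
  moreover have "finite (after_p Pi i x)" unfolding after_p_def by auto
  ultimately show ?thesis using card_le_Suc0_iff_eq by (metis One_nat_def)
qed

lemma before_le1:
  assumes ps: "path_system V Pi" and nb2: "\<not> has_bridge V Pi 2" and nb3: "\<not> has_bridge V Pi 3"
    and i: "i < length Pi"
  shows "card (before_p Pi i x) \<le> 1"
proof -
  have "\<forall>j1\<in>before_p Pi i x. \<forall>j2\<in>before_p Pi i x. j1 = j2"
  proof (intro ballI, rule ccontr)
    fix j1 j2 assume j1: "j1 \<in> before_p Pi i x" and j2: "j2 \<in> before_p Pi i x" and ne: "j1 \<noteq> j2"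
    obtain z1 where z1: "precedes (Pi ! i) z1 x" "precedes (Pi ! j1) x z1" "j1 < length Pi" "j1 \<noteq> i"
      using j1 unfolding before_p_def by blast
    obtain z2 where z2: "precedes (Pi ! i) z2 x" "precedes (Pi ! j2) x z2" "j2 < length Pi" "j2 \<noteq> i"
      using j2 unfolding before_p_def by blast
    have d: "distinct (Pi ! i)" using ps_dist[OF ps i] .
    have n1: "z1 \<noteq> x" "z2 \<noteq> x" using prec_neq[OF d] z1 z2 by auto
    show False
    proof (cases "z1 = z2")
      case True
      then show False using bridge2[OF ps z1(3) z2(3) ne z1(2)] z2(2) nb2 by auto
    next
      case False
      have "z1 \<in> set (Pi ! i)" "z2 \<in> set (Pi ! i)" using prec_mem z1(1) z2(1) by auto
      then have "precedes (Pi ! i) z1 z2 \<or> precedes (Pi ! i) z2 z1" using prec_total False by blast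
      then show False
      proof
        assume h: "precedes (Pi ! i) z1 z2"
        show False using bridge3[OF ps z1(3) i z2(3) z1(4) z2(4)[symmetric] ne z1(2) h z2(2) n1(1)[symmetric] False n1(2)[symmetric]] nb3 by blast
      next
        assume h: "precedes (Pi ! i) z2 z1"
        show False using bridge3[OF ps z2(3) i z1(3) z2(4) z1(4)[symmetric] ne[symmetric] z2(2) h z1(2) n1(2)[symmetric] False[symmetric] n1(1)[symmetric]] nb3 by blast
      qed
    qed
  qed
  moreover have "finite (before_p Pi i x)" unfolding before_p_def by auto
  ultimately show ?thesis using card_le_Suc0_iff_eq by (metis One_nat_def)
qed


definition inc :: "nat list list \<Rightarrow> (nat \<times> nat) set" where
  "inc Pi = Sigma {..<length Pi} (\<lambda>i. set (Pi ! i))"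

lemma card_inc: "path_system V Pi \<Longrightarrow> card (inc Pi) = ps_size Pi"
proof -
  assume ps: "path_system V Pi"
  have "card (inc Pi) = (\<Sum>i<length Pi. card (set (Pi ! i)))"
    unfolding inc_def by (simp add: card_SigmaI)
  also have "\<dots> = (\<Sum>i<length Pi. length (Pi ! i))"
    using ps_dist[OF ps] distinct_card by (intro sum.cong) auto
  also have "\<dots> = ps_size Pi" unfolding ps_size_def
    by (simp add: sum_list_sum_nth atLeast0LessThan)
  finally show ?thesis .
qed

definition Erel :: "nat list list \<Rightarrow> nat \<times> nat \<Rightarrow> nat \<times> nat \<Rightarrow> bool" where
  "Erel Pi a b = (snd a = snd b \<and> fst a \<noteq> fst b \<and> fst a < length Pi \<and> fst b < length Pi \<and>
     ((\<exists>z. precedes (Pi ! fst a) (snd a) z \<and> precedes (Pi ! fst b) z (snd a)) \<or>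
      (\<exists>z. precedes (Pi ! fst a) z (snd a) \<and> precedes (Pi ! fst b) (snd a) z)))"

lemma Erel_sym: "\<forall>a b. Erel Pi a b \<longrightarrow> Erel Pi b a"
  unfolding Erel_def by metis

lemma Erel_irr: "\<forall>a. \<not> Erel Pi a a"
  unfolding Erel_def by auto

lemma Erel_deg:
  assumes ps: "path_system V Pi" and nb2: "\<not> has_bridge V Pi 2" and nb3: "\<not> has_bridge V Pi 3"
  shows "\<forall>a\<in>inc Pi. card {b\<in>inc Pi. Erel Pi a b} \<le> 2"
proof
  fix a assume a: "a \<in> inc Pi"
  obtain i x where ax: "a = (i, x)" by fastforce
  have i: "i < length Pi" using a ax unfolding inc_def by auto
  have "{b\<in>inc Pi. Erel Pi a b} \<subseteq> (\<lambda>j. (j, x)) ` (after_p Pi i x \<union> before_p Pi i x)"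
  proof
    fix b assume "b \<in> {b\<in>inc Pi. Erel Pi a b}"
    then have "Erel Pi (i, x) b" using ax by auto
    then show "b \<in> (\<lambda>j. (j, x)) ` (after_p Pi i x \<union> before_p Pi i x)"
      unfolding Erel_def after_p_def before_p_def
      by (cases b) auto
  qed
  then have "card {b\<in>inc Pi. Erel Pi a b} \<le> card ((\<lambda>j. (j, x)) ` (after_p Pi i x \<union> before_p Pi i x))"
    by (rule card_mono[rotated]) (auto simp: after_p_def before_p_def)
  also have "\<dots> \<le> card (after_p Pi i x \<union> before_p Pi i x)" by (rule card_image_le) (auto simp: after_p_def before_p_def)
  also have "\<dots> \<le> card (after_p Pi i x) + card (before_p Pi i x)" by (rule card_Un_le)
  also have "\<dots> \<le> 2" using after_le1[OF ps nb2 nb3 i, of x] before_le1[OF ps nb2 nb3 i, of x] by linarith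
  finally show "card {b\<in>inc Pi. Erel Pi a b} \<le> 2" .
qed

lemma sum_list_bound: "(\<forall>x\<in>set xs. f x \<le> (m::nat)) \<Longrightarrow> sum_list (map f xs) \<le> length xs * m"
  by (induction xs) auto

lemma beta_set_finite:
  "finite {ps_size Pi | V Pi. path_system V Pi \<and> card V = n \<and> length Pi = p \<and> girth_gt V Pi k}"
proof (rule finite_subset[of _ "{..p*n}"])
  show "{ps_size Pi | V Pi. path_system V Pi \<and> card V = n \<and> length Pi = p \<and> girth_gt V Pi k} \<subseteq> {..p*n}"
  proof
    fix s assume "s \<in> {ps_size Pi | V Pi. path_system V Pi \<and> card V = n \<and> length Pi = p \<and> girth_gt V Pi k}"
    then obtain V Pi where h: "s = ps_size Pi" "path_system V Pi" "card V = n" "length Pi = p" by blast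
    have "\<forall>\<pi>\<in>set Pi. length \<pi> \<le> n"
    proof
      fix \<pi> assume "\<pi> \<in> set Pi"
      then have "distinct \<pi>" "set \<pi> \<subseteq> V" "finite V" using h(2) unfolding path_system_def by auto
      then show "length \<pi> \<le> n" using h(3) by (metis card_mono distinct_card)
    qed
    then show "s \<in> {..p*n}" using sum_list_bound[of Pi length n] h unfolding ps_size_def by auto
  qed
qed auto

lemma empty_sys: "path_system {..<n} (replicate p []) \<and> card {..<n} = n \<and> length (replicate p []) = p
   \<and> girth_gt {..<n} (replicate p []) k"
  unfolding path_system_def girth_gt_def has_bridge_def
  by (auto simp: image_subset_iff)

lemma no_small_bridge:
  assumes "girth_gt V Pi k" "k \<ge> 3" "b \<le> 3"
  shows "\<not> has_bridge V Pi b"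
proof
  assume "has_bridge V Pi b"
  then have "enat b > k" using assms(1) unfolding girth_gt_def by blast
  moreover have "enat b \<le> 3" using assms(3) by (simp add: numeral_eq_enat)
  ultimately show False using assms(2) by auto
qed

theorem lemma3p10:
  shows "\<exists>c::real. c > 0 \<and> (\<forall>(n::nat) (p::nat) (k::enat). n \<ge> 1 \<and> p \<ge> 1 \<and> k \<ge> 3 \<longrightarrow>
     (\<exists>V Pi. path_system V Pi \<and> card V = n \<and> length Pi = p \<and> girth_gt V Pi k \<and>
        no_2cycle Pi \<and> c * real (beta n p k) \<le> real (ps_size Pi) \<and> ps_size Pi \<le> beta n p k))"
proof (rule exI[of _ "1/3"], intro conjI allI impI)
  fix n p :: nat and k :: enat
  assume asm: "n \<ge> 1 \<and> p \<ge> 1 \<and> k \<ge> 3"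
  define B where "B = {ps_size Pi | V Pi. path_system V Pi \<and> card V = n \<and> length Pi = p \<and> girth_gt V Pi k}"
  have fB: "finite B" unfolding B_def by (rule beta_set_finite)
  have neB: "B \<noteq> {}" unfolding B_def using empty_sys by blast
  have "beta n p k \<in> B" unfolding beta_def B_def[symmetric] using fB neB by (rule Max_in)
  then obtain V Pi where S: "ps_size Pi = beta n p k" "path_system V Pi" "card V = n" "length Pi = p"
    "girth_gt V Pi k" unfolding B_def by force
  have nb2: "\<not> has_bridge V Pi 2" using no_small_bridge[OF S(5)] asm by auto
  have nb3: "\<not> has_bridge V Pi 3" using no_small_bridge[OF S(5)] asm by auto
  have finc: "finite (inc Pi)" unfolding inc_def by auto
  obtain I where I: "I \<subseteq> inc Pi" "\<forall>a\<in>I. \<forall>b\<in>I. \<not> Erel Pi a b" "card (inc Pi) \<le> (2+1) * card I"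
    using indep_exists[OF finc Erel_deg[OF S(2) nb2 nb3] Erel_sym Erel_irr] by blast
  define Pi' where "Pi' = map (\<lambda>i. filter (\<lambda>x. (i, x) \<in> I) (Pi ! i)) [0..<length Pi]"
  have len': "length Pi' = length Pi" unfolding Pi'_def by simp
  have nth': "\<And>i. i < length Pi \<Longrightarrow> Pi' ! i = filter (\<lambda>x. (i, x) \<in> I) (Pi ! i)"
    unfolding Pi'_def by simp
  have ps': "path_system V Pi'"
    unfolding path_system_def
  proof (intro conjI ballI)
    show "finite V" using S(2) unfolding path_system_def by auto
  next
    fix \<pi> assume "\<pi> \<in> set Pi'"
    then obtain i where i: "i < length Pi" "\<pi> = Pi' ! i" using len' by (metis in_set_conv_nth)
    then show "distinct \<pi>" using nth' ps_dist[OF S(2)] by auto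
    show "set \<pi> \<subseteq> V" using i nth' ps_mem[OF S(2)] by auto
  qed
  have prec': "\<And>i x y. i < length Pi \<Longrightarrow> precedes (Pi' ! i) x y \<Longrightarrow>
      precedes (Pi ! i) x y \<and> (i, x) \<in> I \<and> (i, y) \<in> I"
    using nth' prec_filter by metis
  have girth': "girth_gt V Pi' k"
    unfolding girth_gt_def
  proof (intro allI impI)
    fix b assume hb: "has_bridge V Pi' b"
    have "has_bridge V Pi b"
      using hb unfolding has_bridge_def len'
    proof (elim conjE exE, intro conjI exI)
      fix v q assume h: "1 \<le> b" "inj_on v {..<b}" "v ` {..<b} \<subseteq> V" "inj_on q {..<b}"
        "q ` {..<b} \<subseteq> {..<length Pi}" "\<forall>i. i + 1 < b \<longrightarrow> precedes (Pi' ! q i) (v i) (v (i + 1))"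
        "precedes (Pi' ! q (b - 1)) (v 0) (v (b - 1))"
      show "1 \<le> b" "inj_on v {..<b}" "v ` {..<b} \<subseteq> V" "inj_on q {..<b}"
        "q ` {..<b} \<subseteq> {..<length Pi}" using h by auto
      show "\<forall>i. i + 1 < b \<longrightarrow> precedes (Pi ! q i) (v i) (v (i + 1))"
      proof (intro allI impI)
        fix i assume "i + 1 < b"
        then have "i \<in> {..<b}" by simp
        then have "q i < length Pi" using h(5) by blast
        then show "precedes (Pi ! q i) (v i) (v (i + 1))" using prec' h(6) \<open>i + 1 < b\<close> by blast
      qed
      have "b - 1 \<in> {..<b}" using h(1) by simp
      then have "q (b - 1) < length Pi" using h(5) by blast
      then show "precedes (Pi ! q (b - 1)) (v 0) (v (b - 1))" using prec' h(7) by blast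
    qed
    then show "enat b > k" using S(5) unfolding girth_gt_def by blast
  qed
  have nc': "no_2cycle Pi'"
    unfolding no_2cycle_def
  proof
    assume "\<exists>u v i j. i < length Pi' \<and> j < length Pi' \<and> precedes (Pi' ! i) u v \<and> precedes (Pi' ! j) v u"
    then obtain u v i j where h: "i < length Pi" "j < length Pi" "precedes (Pi' ! i) u v" "precedes (Pi' ! j) v u"
      using len' by auto
    have a: "precedes (Pi ! i) u v" "(i, u) \<in> I" using prec'[OF h(1) h(3)] by auto
    have b: "precedes (Pi ! j) v u" "(j, u) \<in> I" using prec'[OF h(2) h(4)] by auto
    have "i \<noteq> j" using a(1) b(1) prec_asym ps_dist[OF S(2) h(1)] by blast
    then have "Erel Pi (i, u) (j, u)" unfolding Erel_def using a b h by auto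
    then show False using I(2) a(2) b(2) by blast
  qed
  have incI: "inc Pi' = I"
  proof -
    have "inc Pi' = {(i, x). i < length Pi \<and> x \<in> set (Pi ! i) \<and> (i, x) \<in> I}"
      unfolding inc_def len' using nth' by auto
    then show ?thesis using I(1) unfolding inc_def by auto
  qed
  have size': "ps_size Pi' = card I" using card_inc[OF ps'] incI by simp
  have inB: "ps_size Pi' \<in> B" unfolding B_def using ps' S len' girth' by auto
  show "\<exists>V Pi. path_system V Pi \<and> card V = n \<and> length Pi = p \<and> girth_gt V Pi k \<and>
        no_2cycle Pi \<and> 1/3 * real (beta n p k) \<le> real (ps_size Pi) \<and> ps_size Pi \<le> beta n p k"
  proof (intro exI conjI)
    show "path_system V Pi'" "card V = n" "length Pi' = p" "girth_gt V Pi' k" "no_2cycle Pi'"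
      using ps' S len' girth' nc' by auto
    have "beta n p k \<le> 3 * card I" using I(3) card_inc[OF S(2)] S(1) by simp
    then show "1/3 * real (beta n p k) \<le> real (ps_size Pi')" using size' by simp
    show "ps_size Pi' \<le> beta n p k" unfolding beta_def B_def[symmetric] using fB inB by (rule Max_ge)
  qed
qed simp

end
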